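(* Let $\Gamma$ be a chain of loops: vertices $w_0,\dots,w_r$ where consecutive vertices $w_{j-1},w_j$ are joined by two parallel edges of equal length, so that the $j$-th loop has length $\lambda_j$. Suppose the distinct loop lengths occurring are $L_1,\dots,L_m$, with $L_i$ occurring $n_i$ times, and let $L=\sum_j\lambda_j$ be the total length. Then the eigenfrequencies $k$ (eigenvalues $k^2$) of $\mathbf{L}(\Gamma)$ with standard vertex conditions are: $0$ with multiplicity one; $2\pi N/L$ with multiplicity one for each positive integer $N$; and $2\pi N/L_i$ with multiplicity $n_i$ for each $i$ and each positive integer $N$ (multiplicities adding when these values coincide). Equivalently the secular equation is $\Sigma(k)=\left(-1+e^{ikL}\right)\prod_{i=1}^m\left(-1+e^{iL_ik}\right)^{n_i}$. In particular the spectrum does not depend on the order of the loops in the chain. *)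

theory Defs
  imports "HOL-Analysis.Analysis" "HOL-Library.Function_Algebras"
begin

text \<open>Loop j (1 <= j <= r) joins the vertices
  w_(j-1) and w_j by two parallel edges (j,False) and (j,True), each of length
  lam j / 2, so that the j-th loop has total length lam j.  Each edge (j,s) is
  parametrised by x in [0, lam j / 2], with x = 0 at w_(j-1) and x = lam j / 2 at w_j.
  A function on the graph is a map u :: (nat * bool) => real => real, required to
  vanish outside the edges of the graph.\<close>

type_synonym graph_fun = "nat \<times> bool \<Rightarrow> real \<Rightarrow> real"

definition edge_len :: "(nat \<Rightarrow> real) \<Rightarrow> nat \<Rightarrow> real" where
  "edge_len lam j = lam j / 2"

definition edge_solution :: "real \<Rightarrow> real \<Rightarrow> (real \<Rightarrow> real) \<Rightarrow> (real \<Rightarrow> real) \<Rightarrow> bool" where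
  "edge_solution mu l f f' \<longleftrightarrow>
     (\<forall>x\<in>{0..l}. (f has_real_derivative f' x) (at x within {0..l}) \<and>
                 (f' has_real_derivative (- mu * f x)) (at x within {0..l}))"

definition chain_eigenfunction :: "nat \<Rightarrow> (nat \<Rightarrow> real) \<Rightarrow> real \<Rightarrow> graph_fun \<Rightarrow> bool" where
  "chain_eigenfunction r lam mu u \<longleftrightarrow>
     (\<forall>j s x. (j \<notin> {1..r} \<or> x \<notin> {0..edge_len lam j}) \<longrightarrow> u (j,s) x = 0) \<and>
     (\<exists>du :: graph_fun.
        (\<forall>j\<in>{1..r}. \<forall>s. edge_solution mu (edge_len lam j) (u (j,s)) (du (j,s))) \<and>
        \<comment> \<open>continuity: a common value phi v at every vertex w_v\<close>
        (\<exists>phi :: nat \<Rightarrow> real. \<forall>j\<in>{1..r}. \<forall>s.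
            u (j,s) 0 = phi (j - 1) \<and> u (j,s) (edge_len lam j) = phi j) \<and>
        \<comment> \<open>Kirchhoff: sum of outgoing derivatives vanishes at every vertex\<close>
        (\<forall>v\<in>{0..r}. (\<Sum>j\<in>{1..r}. \<Sum>s\<in>(UNIV::bool set).
            (if j - 1 = v then du (j,s) 0 else 0)
          - (if j = v then du (j,s) (edge_len lam j) else 0)) = 0))"

definition gf_scale :: "real \<Rightarrow> graph_fun \<Rightarrow> graph_fun" where
  "gf_scale c u = (\<lambda>e x. c * u e x)"

definition eigenspace_chain :: "nat \<Rightarrow> (nat \<Rightarrow> real) \<Rightarrow> real \<Rightarrow> graph_fun set" where
  "eigenspace_chain r lam mu = {u. chain_eigenfunction r lam mu u}"

definition multiplicity_chain :: "nat \<Rightarrow> (nat \<Rightarrow> real) \<Rightarrow> real \<Rightarrow> nat" where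
  "multiplicity_chain r lam mu = vector_space.dim gf_scale (eigenspace_chain r lam mu)"

end

theory Submission imports Defs begin

definition cf :: "real \<Rightarrow> real \<Rightarrow> real" where
  "cf mu x = (if mu > 0 then cos (sqrt mu * x) else if mu = 0 then 1 else cosh (sqrt (-mu) * x))"
definition sf :: "real \<Rightarrow> real \<Rightarrow> real" where
  "sf mu x = (if mu > 0 then sin (sqrt mu * x) / sqrt mu else if mu = 0 then x
              else sinh (sqrt (-mu) * x) / sqrt (-mu))"

lemma cf0[simp]: "cf mu 0 = 1" by (simp add: cf_def)
lemma sf0[simp]: "sf mu 0 = 0" by (simp add: sf_def)

lemma sq_pos: "mu > 0 \<Longrightarrow> sqrt mu * sqrt mu = (mu::real)" by simp
lemma sq_neg: "mu < 0 \<Longrightarrow> sqrt (-mu) * sqrt (-mu) = - (mu::real)" by simp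

lemma gen_cc: "c > 0 \<Longrightarrow> (c*c) * (a / c) = a * (c::real)" by (simp add: field_simps)

lemma gen_cc2: "c > 0 \<Longrightarrow> (c*c) * (a / c * (b / c)) = a * (b::real)" by (simp add: field_simps)

lemma cf_deriv: "(cf mu has_real_derivative (- mu * sf mu x)) (at x within S)"
proof -
  consider "mu > 0" | "mu = 0" | "mu < 0" by linarith
  then show ?thesis
  proof cases
    case 1
    have "((\<lambda>x. cos (sqrt mu * x)) has_real_derivative (- sin (sqrt mu * x) * sqrt mu)) (at x within S)"
      by (auto intro!: derivative_eq_intros)
    moreover have "- sin (sqrt mu * x) * sqrt mu = - mu * sf mu x"
    proof -
      have e: "(sqrt mu * sqrt mu) * (sin (sqrt mu * x) / sqrt mu) = sin (sqrt mu * x) * sqrt mu"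
        by (rule gen_cc) (simp add: 1)
      have "mu * sf mu x = sin (sqrt mu * x) * sqrt mu" using e[unfolded sq_pos[OF 1]] 1 by (simp add: sf_def)
      then show ?thesis by simp
    qed
    ultimately show ?thesis using 1 unfolding cf_def by simp
  next
    case 2 then show ?thesis unfolding cf_def by simp
  next
    case 3
    have "((\<lambda>x. cosh (sqrt (-mu) * x)) has_real_derivative (sinh (sqrt (-mu) * x) * sqrt (-mu))) (at x within S)"
      by (auto intro!: derivative_eq_intros)
    moreover have "sinh (sqrt (-mu) * x) * sqrt (-mu) = - mu * sf mu x"
    proof -
      have e: "(sqrt (-mu) * sqrt (-mu)) * (sinh (sqrt (-mu) * x) / sqrt (-mu)) = sinh (sqrt (-mu) * x) * sqrt (-mu)"
        by (rule gen_cc) (simp add: 3)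
      have "- mu * sf mu x = sinh (sqrt (-mu) * x) * sqrt (-mu)" using e[unfolded sq_neg[OF 3]] 3 by (simp add: sf_def)
      then show ?thesis by simp
    qed
    ultimately show ?thesis using 3 unfolding cf_def by simp
  qed
qed

lemma sf_deriv: "(sf mu has_real_derivative (cf mu x)) (at x within S)"
proof -
  consider "mu > 0" | "mu = 0" | "mu < 0" by linarith
  then show ?thesis
  proof cases
    case 1
    have "((\<lambda>x. sin (sqrt mu * x)) has_real_derivative (cos (sqrt mu * x) * sqrt mu)) (at x within S)"
      by (auto intro!: derivative_eq_intros)
    then have "((\<lambda>x. sin (sqrt mu * x) / sqrt mu) has_real_derivative (cos (sqrt mu * x) * sqrt mu / sqrt mu)) (at x within S)"
      by (rule DERIV_cdivide)
    then show ?thesis using 1 unfolding cf_def sf_def by (simp add: field_simps)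
  next
    case 2 then show ?thesis unfolding cf_def sf_def by simp
  next
    case 3
    have "((\<lambda>x. sinh (sqrt (-mu) * x)) has_real_derivative (cosh (sqrt (-mu) * x) * sqrt (-mu))) (at x within S)"
      by (auto intro!: derivative_eq_intros)
    then have "((\<lambda>x. sinh (sqrt (-mu) * x) / sqrt (-mu)) has_real_derivative (cosh (sqrt (-mu) * x) * sqrt (-mu) / sqrt (-mu))) (at x within S)"
      by (rule DERIV_cdivide)
    then show ?thesis using 3 unfolding cf_def sf_def by (simp add: field_simps)
  qed
qed

lemma pyth: "cf mu x * cf mu x + mu * (sf mu x * sf mu x) = 1"
proof -
  consider "mu > 0" | "mu = 0" | "mu < 0" by linarith
  then show ?thesis
  proof cases
    case 1
    have "mu * (sin (sqrt mu * x) / sqrt mu * (sin (sqrt mu * x) / sqrt mu)) = sin (sqrt mu * x)^2"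
      using gen_cc2[of "sqrt mu" "sin (sqrt mu * x)" "sin (sqrt mu * x)", unfolded sq_pos[OF 1]] 1 by (simp add: power2_eq_square)
    then show ?thesis using 1 unfolding cf_def sf_def by (simp add: power2_eq_square[symmetric] sin_squared_eq)
  next
    case 2 then show ?thesis unfolding cf_def sf_def by simp
  next
    case 3
    have "mu * (sinh (sqrt (-mu) * x) / sqrt (-mu) * (sinh (sqrt (-mu) * x) / sqrt (-mu))) = - (sinh (sqrt (-mu) * x) * sinh (sqrt (-mu) * x))"
      using gen_cc2[of "sqrt (-mu)" "sinh (sqrt (-mu) * x)" "sinh (sqrt (-mu) * x)", unfolded sq_neg[OF 3]] 3 by simp
    then show ?thesis using 3 cosh_square_eq[of "sqrt (-mu) * x"] unfolding cf_def sf_def by (simp add: power2_eq_square)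
  qed
qed

lemma cf_add: "cf mu (x + y) = cf mu x * cf mu y - mu * (sf mu x * sf mu y)"
proof -
  consider "mu > 0" | "mu = 0" | "mu < 0" by linarith
  then show ?thesis
  proof cases
    case 1
    have "mu * (sin (sqrt mu * x) / sqrt mu * (sin (sqrt mu * y) / sqrt mu)) = sin (sqrt mu * x) * sin (sqrt mu * y)"
      using gen_cc2[of "sqrt mu" "sin (sqrt mu * x)" "sin (sqrt mu * y)", unfolded sq_pos[OF 1]] 1 by simp
    then show ?thesis using 1 unfolding cf_def sf_def by (simp add: distrib_left cos_add)
  next
    case 2 then show ?thesis unfolding cf_def sf_def by simp
  next
    case 3
    have "mu * (sinh (sqrt (-mu) * x) / sqrt (-mu) * (sinh (sqrt (-mu) * y) / sqrt (-mu))) = - sinh (sqrt (-mu) * x) * sinh (sqrt (-mu) * y)"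
      using gen_cc2[of "sqrt (-mu)" "sinh (sqrt (-mu) * x)" "sinh (sqrt (-mu) * y)", unfolded sq_neg[OF 3]] 3 by simp
    then show ?thesis using 3 unfolding cf_def sf_def by (simp add: distrib_left cosh_add)
  qed
qed

lemma sf_add: "sf mu (x + y) = sf mu x * cf mu y + cf mu x * sf mu y"
  unfolding cf_def sf_def by (auto simp: distrib_left sin_add sinh_add field_simps)

lemma edge_unique:
  assumes es: "edge_solution mu l f f'" and l: "0 \<le> l" and x: "x \<in> {0..l}"
  shows "f x = f 0 * cf mu x + f' 0 * sf mu x \<and> f' x = - mu * f 0 * sf mu x + f' 0 * cf mu x"
proof -
  let ?S = "{0..l::real}"
  have d: "(f has_real_derivative f' y) (at y within ?S)" "(f' has_real_derivative (- mu * f y)) (at y within ?S)"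
    if "y \<in> ?S" for y using es that unfolding edge_solution_def by auto
  have "\<exists>c. \<forall>y\<in>?S. f y * cf mu y - f' y * sf mu y = c"
  proof (rule has_field_derivative_zero_constant)
    fix y assume y: "y \<in> ?S"
    have "((\<lambda>y. f y * cf mu y - f' y * sf mu y) has_real_derivative
       (f' y * cf mu y + (- mu * sf mu y) * f y) - ((- mu * f y) * sf mu y + cf mu y * f' y)) (at y within ?S)"
      by (intro DERIV_diff DERIV_mult d[OF y] cf_deriv sf_deriv)
    then show "((\<lambda>y. f y * cf mu y - f' y * sf mu y) has_real_derivative 0) (at y within ?S)"
      by (simp add: algebra_simps)
  qed simp
  then obtain a where a: "\<And>y. y \<in> ?S \<Longrightarrow> f y * cf mu y - f' y * sf mu y = a" by blast
  have "\<exists>c. \<forall>y\<in>?S. f' y * cf mu y + mu * f y * sf mu y = c"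
  proof (rule has_field_derivative_zero_constant)
    fix y assume y: "y \<in> ?S"
    have "((\<lambda>y. f' y * cf mu y + mu * f y * sf mu y) has_real_derivative
       ((- mu * f y) * cf mu y + (- mu * sf mu y) * f' y) + ((mu * f' y) * sf mu y + cf mu y * (mu * f y))) (at y within ?S)"
      by (intro DERIV_add DERIV_mult DERIV_cmult d[OF y] cf_deriv sf_deriv)
    then show "((\<lambda>y. f' y * cf mu y + mu * f y * sf mu y) has_real_derivative 0) (at y within ?S)"
      by (simp add: algebra_simps)
  qed simp
  then obtain b where b: "\<And>y. y \<in> ?S \<Longrightarrow> f' y * cf mu y + mu * f y * sf mu y = b" by blast
  have 0: "0 \<in> ?S" using l by simp
  have a0: "a = f 0" using a[OF 0] by simp
  have b0: "b = f' 0" using b[OF 0] by simp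
  have p: "cf mu x * cf mu x + mu * (sf mu x * sf mu x) = 1" by (rule pyth)
  have ax: "f x * cf mu x - f' x * sf mu x = f 0" using a[OF x] a0 by simp
  have bx: "f' x * cf mu x + mu * f x * sf mu x = f' 0" using b[OF x] b0 by simp
  have "f x = f x * (cf mu x * cf mu x + mu * (sf mu x * sf mu x))" using p by simp
  also have "\<dots> = (f x * cf mu x - f' x * sf mu x) * cf mu x + (f' x * cf mu x + mu * f x * sf mu x) * sf mu x"
    by (simp add: algebra_simps)
  finally have 1: "f x = f 0 * cf mu x + f' 0 * sf mu x" using ax bx by simp
  have "f' x = f' x * (cf mu x * cf mu x + mu * (sf mu x * sf mu x))" using p by simp
  also have "\<dots> = - mu * (f x * cf mu x - f' x * sf mu x) * sf mu x + (f' x * cf mu x + mu * f x * sf mu x) * cf mu x"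
    by (simp add: algebra_simps)
  finally have 2: "f' x = - mu * f 0 * sf mu x + f' 0 * cf mu x" using ax bx by simp
  show ?thesis using 1 2 by simp
qed


definition T :: "(nat \<Rightarrow> real) \<Rightarrow> nat \<Rightarrow> real" where
  "T lam j = (\<Sum>i\<in>{1..j}. edge_len lam i)"

lemma T0[simp]: "T lam 0 = 0" by (simp add: T_def)
lemma T_Suc: "T lam (Suc j) = T lam j + edge_len lam (Suc j)"
  by (simp add: T_def)

lemma kirchhoff_reduce:
  fixes X Y :: "nat \<Rightarrow> bool \<Rightarrow> real"
  shows "(\<Sum>j\<in>{1..r}. \<Sum>s\<in>(UNIV::bool set). (if j - 1 = v then X j s else 0) - (if j = v then Y j s else 0))
    = (if v + 1 \<le> r then X (v+1) True + X (v+1) False else 0)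
      - (if 1 \<le> v \<and> v \<le> r then Y v True + Y v False else 0)"
proof -
  have "(\<Sum>j\<in>{1..r}. \<Sum>s\<in>(UNIV::bool set). (if j - 1 = v then X j s else 0) - (if j = v then Y j s else 0))
     = (\<Sum>j\<in>{1..r}. (if j = v + 1 then X j True + X j False else 0) - (if j = v then Y j True + Y j False else 0))"
    by (intro sum.cong refl) (auto simp: UNIV_bool)
  also have "\<dots> = (\<Sum>j\<in>{1..r}. (if j = v + 1 then X j True + X j False else 0)) - (\<Sum>j\<in>{1..r}. (if j = v then Y j True + Y j False else 0))"
    by (rule sum_subtractf)
  also have "\<dots> = (if v + 1 \<le> r then X (v+1) True + X (v+1) False else 0)
      - (if 1 \<le> v \<and> v \<le> r then Y v True + Y v False else 0)"
    by (simp add: sum.delta')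
  finally show ?thesis .
qed

interpretation gf: vector_space gf_scale
  by unfold_locales (auto simp: gf_scale_def fun_eq_iff algebra_simps)

lemma sum_apply_gf: "(\<Sum>i\<in>A. (f i :: graph_fun)) e x = (\<Sum>i\<in>A. f i e x)"
  by (induction A rule: infinite_finite_induct) auto

definition Sym :: "nat \<Rightarrow> (nat \<Rightarrow> real) \<Rightarrow> real \<Rightarrow> graph_fun" where
  "Sym r lam mu = (\<lambda>e x. if fst e \<in> {1..r} \<and> x \<in> {0..edge_len lam (fst e)} then cf mu (T lam (fst e - 1) + x) else 0)"

definition Anti :: "(nat \<Rightarrow> real) \<Rightarrow> real \<Rightarrow> nat \<Rightarrow> graph_fun" where
  "Anti lam mu i = (\<lambda>e x. if fst e = i \<and> x \<in> {0..edge_len lam i} then (if snd e then sf mu x else - sf mu x) else 0)"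

lemma cf_shift_deriv: "((\<lambda>x. cf mu (a + x)) has_real_derivative (- mu * sf mu (a + x))) (at x within S)"
proof -
  have g: "((\<lambda>x. a + x) has_real_derivative 1) (at x within S)" by (auto intro!: derivative_eq_intros)
  show ?thesis using DERIV_chain2[where g="\<lambda>x. a + x", OF cf_deriv[of mu "a+x" UNIV] g] by simp
qed

lemma sf_shift_deriv: "((\<lambda>x. sf mu (a + x)) has_real_derivative (cf mu (a + x))) (at x within S)"
proof -
  have g: "((\<lambda>x. a + x) has_real_derivative 1) (at x within S)" by (auto intro!: derivative_eq_intros)
  show ?thesis using DERIV_chain2[where g="\<lambda>x. a + x", OF sf_deriv[of mu "a+x" UNIV] g] by simp
qed

lemma transform_closed:
  assumes "(f has_real_derivative D) (at x within {0..l})" "x \<in> {0..l}"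
    and "\<And>y. y \<in> {0..l} \<Longrightarrow> f y = g y"
  shows "(g has_real_derivative D) (at x within {0..l})"
  using has_field_derivative_transform_within[OF assms(1) zero_less_one assms(2)] assms(3) by blast

lemma Sym_eig:
  assumes pos: "\<forall>j\<in>{1..r}. lam j > 0" and cond: "mu * sf mu (T lam r) = 0"
  shows "chain_eigenfunction r lam mu (Sym r lam mu)"
  unfolding chain_eigenfunction_def
proof (intro conjI exI[of _ "\<lambda>e x. - mu * sf mu (T lam (fst e - 1) + x)"])
  show "\<forall>j s x. j \<notin> {1..r} \<or> x \<notin> {0..edge_len lam j} \<longrightarrow> Sym r lam mu (j, s) x = 0"
    by (auto simp: Sym_def)
  show "\<forall>j\<in>{1..r}. \<forall>s. edge_solution mu (edge_len lam j) (Sym r lam mu (j, s))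
     ((\<lambda>e x. - mu * sf mu (T lam (fst e - 1) + x)) (j, s))"
    unfolding edge_solution_def
  proof (intro ballI allI conjI)
    fix j s x assume j: "j \<in> {1..r}" and x: "x \<in> {0..edge_len lam j}"
    show "(Sym r lam mu (j, s) has_real_derivative (\<lambda>e x. - mu * sf mu (T lam (fst e - 1) + x)) (j, s) x)
        (at x within {0..edge_len lam j})"
      by (rule transform_closed[OF cf_shift_deriv x]) (use j in \<open>auto simp: Sym_def\<close>)
    show "((\<lambda>e x. - mu * sf mu (T lam (fst e - 1) + x)) (j, s) has_real_derivative - mu * Sym r lam mu (j, s) x)
        (at x within {0..edge_len lam j})"
      using DERIV_cmult[OF sf_shift_deriv[of mu "T lam (j - 1)" x "{0..edge_len lam j}"], of "- mu"]
        j x by (simp add: Sym_def)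
  qed
  show "\<exists>phi. \<forall>j\<in>{1..r}. \<forall>s. Sym r lam mu (j, s) 0 = phi (j - 1) \<and> Sym r lam mu (j, s) (edge_len lam j) = phi j"
  proof (intro exI[of _ "\<lambda>v. cf mu (T lam v)"] ballI allI conjI)
    fix j s assume j: "j \<in> {1..r}"
    have l: "edge_len lam j > 0" using pos j by (simp add: edge_len_def)
    show "Sym r lam mu (j, s) 0 = cf mu (T lam (j - 1))" using j l by (simp add: Sym_def)
    have "T lam j = T lam (j - 1) + edge_len lam j" using j T_Suc[of lam "j - 1"] by simp
    then show "Sym r lam mu (j, s) (edge_len lam j) = cf mu (T lam j)" using j l by (simp add: Sym_def)
  qed
  show "\<forall>v\<in>{0..r}. (\<Sum>j\<in>{1..r}. \<Sum>s\<in>(UNIV::bool set).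
            (if j - 1 = v then (\<lambda>e x. - mu * sf mu (T lam (fst e - 1) + x)) (j,s) 0 else 0)
          - (if j = v then (\<lambda>e x. - mu * sf mu (T lam (fst e - 1) + x)) (j,s) (edge_len lam j) else 0)) = 0"
  proof
    fix v assume v: "v \<in> {0..r}"
    have Tv: "T lam (v - 1) + edge_len lam v = T lam v" if "1 \<le> v" using that T_Suc[of lam "v - 1"] by simp
    show "(\<Sum>j\<in>{1..r}. \<Sum>s\<in>(UNIV::bool set).
            (if j - 1 = v then (\<lambda>e x. - mu * sf mu (T lam (fst e - 1) + x)) (j,s) 0 else 0)
          - (if j = v then (\<lambda>e x. - mu * sf mu (T lam (fst e - 1) + x)) (j,s) (edge_len lam j) else 0)) = 0"
      unfolding kirchhoff_reduce
    proof -
      consider "v = 0" | "1 \<le> v \<and> v < r" | "v = r \<and> 1 \<le> v" using v by fastforce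
      then show "(if v + 1 \<le> r then (\<lambda>e x. - mu * sf mu (T lam (fst e - 1) + x)) (v + 1, True) 0 + (\<lambda>e x. - mu * sf mu (T lam (fst e - 1) + x)) (v + 1, False) 0 else 0) -
    (if 1 \<le> v \<and> v \<le> r then (\<lambda>e x. - mu * sf mu (T lam (fst e - 1) + x)) (v, True) (edge_len lam v) + (\<lambda>e x. - mu * sf mu (T lam (fst e - 1) + x)) (v, False) (edge_len lam v) else 0) = 0"
      proof cases
        case 1 then show ?thesis by simp
      next
        case 2 then show ?thesis using Tv by simp
      next
        case 3 then show ?thesis using Tv cond by simp
      qed
    qed
  qed
qed

lemma Anti_eig:
  assumes pos: "\<forall>j\<in>{1..r}. lam j > 0" and i: "i \<in> {1..r}" and cond: "sf mu (edge_len lam i) = 0"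
  shows "chain_eigenfunction r lam mu (Anti lam mu i)"
  unfolding chain_eigenfunction_def
proof (intro conjI exI[of _ "\<lambda>e x. if fst e = i then (if snd e then cf mu x else - cf mu x) else 0"])
  show "\<forall>j s x. j \<notin> {1..r} \<or> x \<notin> {0..edge_len lam j} \<longrightarrow> Anti lam mu i (j, s) x = 0"
    using i by (auto simp: Anti_def)
  show "\<forall>j\<in>{1..r}. \<forall>s. edge_solution mu (edge_len lam j) (Anti lam mu i (j, s))
     ((\<lambda>e x. if fst e = i then (if snd e then cf mu x else - cf mu x) else 0) (j, s))"
    unfolding edge_solution_def
  proof (intro ballI allI conjI)
    fix j s x assume j: "j \<in> {1..r}" and x: "x \<in> {0..edge_len lam j}"
    show "(Anti lam mu i (j, s) has_real_derivative (\<lambda>e x. if fst e = i then (if snd e then cf mu x else - cf mu x) else 0) (j, s) x)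
        (at x within {0..edge_len lam j})"
    proof (cases "j = i")
      case True
      show ?thesis
      proof (cases s)
        case True
        have "(Anti lam mu i (j, s) has_real_derivative cf mu x) (at x within {0..edge_len lam j})"
          by (rule transform_closed[OF sf_deriv x]) (use \<open>j = i\<close> True in \<open>auto simp: Anti_def\<close>)
        then show ?thesis using \<open>j = i\<close> True by simp
      next
        case False
        have "(Anti lam mu i (j, s) has_real_derivative - cf mu x) (at x within {0..edge_len lam j})"
          by (rule transform_closed[OF DERIV_minus[OF sf_deriv] x]) (use \<open>j = i\<close> False in \<open>auto simp: Anti_def\<close>)
        then show ?thesis using \<open>j = i\<close> False by simp
      qed
    next
      case False
      then have "Anti lam mu i (j, s) = (\<lambda>x. 0)" by (auto simp: Anti_def fun_eq_iff)
      then show ?thesis using False by simp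
    qed
    show "((\<lambda>e x. if fst e = i then (if snd e then cf mu x else - cf mu x) else 0) (j, s) has_real_derivative - mu * Anti lam mu i (j, s) x)
        (at x within {0..edge_len lam j})"
    proof (cases "j = i")
      case True
      show ?thesis
      proof (cases s)
        case True
        show ?thesis using cf_deriv[of mu x] \<open>j = i\<close> True x by (simp add: Anti_def)
      next
        case False
        show ?thesis using DERIV_minus[OF cf_deriv[of mu x]] \<open>j = i\<close> False x by (simp add: Anti_def)
      qed
    next
      case False
      then show ?thesis by (simp add: Anti_def)
    qed
  qed
  show "\<exists>phi. \<forall>j\<in>{1..r}. \<forall>s. Anti lam mu i (j, s) 0 = phi (j - 1) \<and> Anti lam mu i (j, s) (edge_len lam j) = phi j"
    using cond by (intro exI[of _ "\<lambda>_. 0"]) (auto simp: Anti_def)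
  show "\<forall>v\<in>{0..r}. (\<Sum>j\<in>{1..r}. \<Sum>s\<in>(UNIV::bool set).
            (if j - 1 = v then (\<lambda>e x. if fst e = i then (if snd e then cf mu x else - cf mu x) else 0) (j,s) 0 else 0)
          - (if j = v then (\<lambda>e x. if fst e = i then (if snd e then cf mu x else - cf mu x) else 0) (j,s) (edge_len lam j) else 0)) = 0"
    unfolding kirchhoff_reduce by auto
qed


definition Jset :: "nat \<Rightarrow> (nat \<Rightarrow> real) \<Rightarrow> real \<Rightarrow> nat set" where
  "Jset r lam mu = {j\<in>{1..r}. sf mu (edge_len lam j) = 0}"

definition Bset :: "nat \<Rightarrow> (nat \<Rightarrow> real) \<Rightarrow> real \<Rightarrow> graph_fun set" where
  "Bset r lam mu = (if mu * sf mu (T lam r) = 0 then {Sym r lam mu} else {}) \<union> Anti lam mu ` Jset r lam mu"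

lemma eig_repr:
  assumes r: "r \<ge> 1" and pos: "\<forall>j\<in>{1..r}. lam j > 0" and u: "chain_eigenfunction r lam mu u"
  obtains c0 D where "mu * c0 * sf mu (T lam r) = 0"
    "\<And>j. j \<in> {1..r} \<Longrightarrow> D j * sf mu (edge_len lam j) = 0"
    "u = gf_scale c0 (Sym r lam mu) + (\<Sum>j\<in>Jset r lam mu. gf_scale (D j) (Anti lam mu j))"
proof -
  let ?l = "edge_len lam"
  have lpos: "?l j > 0" if "j \<in> {1..r}" for j using pos that by (simp add: edge_len_def)
  obtain du phi where
    van: "\<forall>j s x. (j \<notin> {1..r} \<or> x \<notin> {0..?l j}) \<longrightarrow> u (j,s) x = 0" and
    es: "\<forall>j\<in>{1..r}. \<forall>s. edge_solution mu (?l j) (u (j,s)) (du (j,s))" and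
    ct: "\<forall>j\<in>{1..r}. \<forall>s. u (j,s) 0 = phi (j - 1) \<and> u (j,s) (?l j) = phi j" and
    kc: "\<forall>v\<in>{0..r}. (\<Sum>j\<in>{1..r}. \<Sum>s\<in>(UNIV::bool set).
            (if j - 1 = v then du (j,s) 0 else 0)
          - (if j = v then du (j,s) (?l j) else 0)) = 0"
    using u unfolding chain_eigenfunction_def by blast
  define b where "b j s = du (j,s) 0" for j s
  define c0 where "c0 = phi 0"
  define Bs where "Bs j = b j True + b j False" for j
  define D where "D j = (b j True - b j False) / 2" for j
  have rep: "u (j,s) x = phi (j - 1) * cf mu x + b j s * sf mu x \<and>
             du (j,s) x = - mu * phi (j - 1) * sf mu x + b j s * cf mu x"
    if j: "j \<in> {1..r}" and x: "x \<in> {0..?l j}" for j s x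
    using edge_unique[OF es[rule_format, OF j, of s] less_imp_le[OF lpos[OF j]] x] ct j
    by (simp add: b_def)
  have lmem: "?l j \<in> {0..?l j}" if "j \<in> {1..r}" for j using lpos[OF that] by simp
  have endc: "phi j = phi (j - 1) * cf mu (?l j) + b j s * sf mu (?l j)" if j: "j \<in> {1..r}" for j s
    using rep[OF j lmem[OF j], of s] ct j by simp
  have K: "(if v + 1 \<le> r then du (v+1, True) 0 + du (v+1, False) 0 else 0)
      - (if 1 \<le> v \<and> v \<le> r then du (v, True) (?l v) + du (v, False) (?l v) else 0) = 0"
    if "v \<le> r" for v
    using kc[rule_format, of v] that
      kirchhoff_reduce[where r=r and v=v and X="\<lambda>j s. du (j,s) 0" and Y="\<lambda>j s. du (j,s) (?l j)"] by simp
  have duend: "du (j, True) (?l j) + du (j, False) (?l j) = - 2 * mu * phi (j - 1) * sf mu (?l j) + Bs j * cf mu (?l j)"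
    if j: "j \<in> {1..r}" for j
    using rep[OF j lmem[OF j], of True] rep[OF j lmem[OF j], of False] by (simp add: Bs_def algebra_simps)
  have claim: "j \<le> r \<Longrightarrow> phi j = c0 * cf mu (T lam j) \<and> (j < r \<longrightarrow> Bs (j+1) = - 2 * mu * c0 * sf mu (T lam j))" for j
  proof (induction j)
    case 0
    have "Bs 1 = 0" if "0 < r" using K[of 0] that by (simp add: Bs_def b_def)
    then show ?case by (simp add: c0_def)
  next
    case (Suc j)
    then have IH: "phi j = c0 * cf mu (T lam j)" "Bs (j+1) = - 2 * mu * c0 * sf mu (T lam j)" by auto
    have j1: "Suc j \<in> {1..r}" using Suc.prems by simp
    let ?L = "?l (Suc j)"
    have "2 * phi (Suc j) = 2 * phi j * cf mu ?L + Bs (Suc j) * sf mu ?L"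
      using endc[OF j1, of True] endc[OF j1, of False] by (simp add: Bs_def algebra_simps)
    also have "\<dots> = 2 * c0 * (cf mu (T lam j) * cf mu ?L - mu * (sf mu (T lam j) * sf mu ?L))"
      using IH by (simp add: algebra_simps)
    also have "\<dots> = 2 * c0 * cf mu (T lam (Suc j))" by (simp add: T_Suc cf_add)
    finally have P: "phi (Suc j) = c0 * cf mu (T lam (Suc j))" by simp
    have Q: "Bs (Suc j + 1) = - 2 * mu * c0 * sf mu (T lam (Suc j))" if lt: "Suc j < r"
    proof -
      have "Bs (Suc j + 1) = du (Suc j, True) ?L + du (Suc j, False) ?L"
        using K[of "Suc j"] lt by (simp add: Bs_def b_def)
      also have "\<dots> = - 2 * mu * phi j * sf mu ?L + Bs (Suc j) * cf mu ?L" using duend[OF j1] by simp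
      also have "\<dots> = - 2 * mu * c0 * (sf mu (T lam j) * cf mu ?L + cf mu (T lam j) * sf mu ?L)"
        using IH by (simp add: algebra_simps)
      also have "\<dots> = - 2 * mu * c0 * sf mu (T lam (Suc j))" by (simp add: T_Suc sf_add)
      finally show ?thesis .
    qed
    show ?case using P Q by simp
  qed
  have final: "mu * c0 * sf mu (T lam r) = 0"
  proof -
    have r1: "r \<in> {1..r}" using r by simp
    have rr: "r - 1 + 1 = r" "Suc (r - 1) = r" using r by auto
    have cl: "phi (r - 1) = c0 * cf mu (T lam (r - 1))" "Bs r = - 2 * mu * c0 * sf mu (T lam (r - 1))"
      using claim[of "r - 1"] r rr by auto
    have "0 = - 2 * mu * phi (r - 1) * sf mu (?l r) + Bs r * cf mu (?l r)"
      using K[of r] duend[OF r1] r by simp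
    also have "\<dots> = - 2 * mu * c0 * (sf mu (T lam (r - 1)) * cf mu (?l r) + cf mu (T lam (r - 1)) * sf mu (?l r))"
      using cl by (simp add: algebra_simps)
    also have "\<dots> = - 2 * mu * c0 * sf mu (T lam r)" using T_Suc[of lam "r - 1"] rr by (simp add: sf_add)
    finally show ?thesis by simp
  qed
  have Dz: "D j * sf mu (?l j) = 0" if j: "j \<in> {1..r}" for j
    using endc[OF j, of True] endc[OF j, of False] by (simp add: D_def algebra_simps) (metis mult_cancel_right)
  have eq: "u = gf_scale c0 (Sym r lam mu) + (\<Sum>j\<in>Jset r lam mu. gf_scale (D j) (Anti lam mu j))"
  proof (intro ext)
    fix e :: "nat \<times> bool" and x :: real
    obtain j :: nat and s :: bool where e: "e = (j, s)" by (cases e)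
    have sumev: "(\<Sum>i\<in>Jset r lam mu. gf_scale (D i) (Anti lam mu i)) (j, s) x
        = (\<Sum>i\<in>Jset r lam mu. (if i = j then D i * Anti lam mu i (j, s) x else 0))"
      unfolding sum_apply_gf by (intro sum.cong refl) (auto simp: gf_scale_def Anti_def)
    also have "\<dots> = (if j \<in> Jset r lam mu then D j * Anti lam mu j (j, s) x else 0)"
      by (simp add: sum.delta' Jset_def)
    finally have sumev': "(\<Sum>i\<in>Jset r lam mu. gf_scale (D i) (Anti lam mu i)) (j, s) x
       = (if j \<in> Jset r lam mu then D j * Anti lam mu j (j, s) x else 0)" .
    show "u e x = (gf_scale c0 (Sym r lam mu) + (\<Sum>j\<in>Jset r lam mu. gf_scale (D j) (Anti lam mu j))) e x"
    proof (cases "j \<in> {1..r} \<and> x \<in> {0..?l j}")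
      case True
      then have j: "j \<in> {1..r}" and x: "x \<in> {0..?l j}" by auto
      have jr: "j - 1 < r" "j - 1 + 1 = j" using j by auto
      have cl: "phi (j - 1) = c0 * cf mu (T lam (j - 1))" "Bs j = - 2 * mu * c0 * sf mu (T lam (j - 1))"
        using claim[of "j - 1"] jr by auto
      have bs: "b j s = Bs j / 2 + (if s then D j else - D j)" by (cases s) (simp_all add: Bs_def D_def field_simps)
      have Dj: "D j = 0" if "j \<notin> Jset r lam mu" using Dz[OF j] that j by (simp add: Jset_def)
      have "u (j,s) x = phi (j - 1) * cf mu x + b j s * sf mu x" using rep[OF j x] by simp
      also have "\<dots> = c0 * (cf mu (T lam (j - 1)) * cf mu x - mu * (sf mu (T lam (j - 1)) * sf mu x))
          + (if s then D j else - D j) * sf mu x"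
        unfolding bs cl by (simp add: algebra_simps)
      also have "\<dots> = c0 * Sym r lam mu (j, s) x + (if j \<in> Jset r lam mu then D j * Anti lam mu j (j, s) x else 0)"
        using j x Dj by (auto simp: Sym_def Anti_def cf_add)
      finally show ?thesis using e sumev' by (simp add: gf_scale_def)
    next
      case False
      then have "u (j,s) x = 0" using van by blast
      moreover have "Sym r lam mu (j, s) x = 0" using False by (auto simp: Sym_def)
      moreover have "j \<in> Jset r lam mu \<Longrightarrow> Anti lam mu j (j, s) x = 0" using False by (auto simp: Anti_def Jset_def)
      ultimately show ?thesis using e sumev' by (simp add: gf_scale_def)
    qed
  qed
  show ?thesis using that[OF final Dz eq] .
qed


lemma sf_nonzero_point:
  assumes l: "l > 0" shows "\<exists>x\<in>{0..l}. sf mu x \<noteq> 0"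
proof -
  consider "mu > 0" | "mu = 0" | "mu < 0" by linarith
  then show ?thesis
  proof cases
    case 1
    define x where "x = min l (pi / (2 * sqrt mu))"
    have sp: "sqrt mu > 0" using 1 by simp
    have x0: "x > 0" using l sp by (simp add: x_def)
    have "sqrt mu * x \<le> sqrt mu * (pi / (2 * sqrt mu))" using sp by (intro mult_left_mono) (auto simp: x_def)
    also have "\<dots> = pi / 2" using sp by simp
    finally have "sqrt mu * x < pi" using pi_gt_zero by linarith
    moreover have "0 < sqrt mu * x" using sp x0 by simp
    ultimately have "sin (sqrt mu * x) > 0" by (rule sin_gt_zero[rotated])
    then have "sf mu x \<noteq> 0" using 1 sp by (simp add: sf_def)
    moreover have "x \<in> {0..l}" using x0 by (simp add: x_def)
    ultimately show ?thesis by blast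
  next
    case 2 then show ?thesis using l by (intro bexI[of _ l]) (auto simp: sf_def)
  next
    case 3
    have "sinh (sqrt (-mu) * l) > 0" using 3 l by simp
    then have "sf mu l \<noteq> 0" using 3 l by (simp add: sf_def)
    then show ?thesis using l by (intro bexI[of _ l]) auto
  qed
qed

lemma Anti_inj:
  assumes pos: "\<forall>j\<in>{1..r}. lam j > 0" and i: "i \<in> {1..r}" and "Anti lam mu i = Anti lam mu j"
  shows "i = j"
proof (rule ccontr)
  assume ne: "i \<noteq> j"
  have "edge_len lam i > 0" using pos i by (simp add: edge_len_def)
  then obtain x where x: "x \<in> {0..edge_len lam i}" "sf mu x \<noteq> 0" using sf_nonzero_point by blast
  have "Anti lam mu i (i, True) x = sf mu x" using x by (simp add: Anti_def)
  moreover have "Anti lam mu j (i, True) x = 0" using ne by (simp add: Anti_def)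
  ultimately show False using assms(3) x by simp
qed

lemma Bset_props:
  assumes r: "r \<ge> 1" and pos: "\<forall>j\<in>{1..r}. lam j > 0"
  shows "gf.independent (Bset r lam mu)"
    and "card (Bset r lam mu) = (if mu * sf mu (T lam r) = 0 then 1 else 0) + card (Jset r lam mu)"
proof -
  let ?B = "Bset r lam mu" and ?J = "Jset r lam mu" and ?S = "Sym r lam mu"
  have finJ: "finite ?J" by (simp add: Jset_def)
  have finB: "finite ?B" using finJ by (simp add: Bset_def)
  have l1: "edge_len lam 1 > 0" using pos r by (simp add: edge_len_def)
  have Sym1: "?S (1, True) 0 = 1" using r l1 by (simp add: Sym_def)
  have Anti1: "Anti lam mu j (1, True) 0 = 0" for j by (simp add: Anti_def)
  have SnA: "?S \<notin> Anti lam mu ` ?J" using Sym1 Anti1 by auto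
  have inj: "inj_on (Anti lam mu) ?J" using Anti_inj[OF pos] by (auto simp: inj_on_def Jset_def)
  show "card ?B = (if mu * sf mu (T lam r) = 0 then 1 else 0) + card ?J"
    using SnA finJ card_image[OF inj] by (simp add: Bset_def)
  show "gf.independent ?B"
  proof (rule gf.independent_if_scalars_zero[OF finB])
    fix f :: "graph_fun \<Rightarrow> real" and v
    assume z: "(\<Sum>x\<in>?B. gf_scale (f x) x) = 0" and v: "v \<in> ?B"
    have ev: "(\<Sum>w\<in>?B. f w * w e y) = 0" for e y
      using fun_cong[OF fun_cong[OF z, of e], of y] by (simp add: sum_apply_gf gf_scale_def)
    show "f v = 0"
    proof (cases "v = ?S")
      case True
      have w1: "w (1, True) 0 = (if w = ?S then 1 else 0)" if "w \<in> ?B" for w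
        using that Sym1 Anti1 by (auto simp: Bset_def split: if_splits)
      have "(\<Sum>w\<in>?B. f w * w (1, True) 0) = (\<Sum>w\<in>?B. if w = ?S then f w else 0)"
        by (rule sum.cong[OF refl], subst w1) auto
      also have "\<dots> = f ?S" using v True finB by (simp add: sum.delta')
      finally show ?thesis using ev True by simp
    next
      case False
      then obtain j where j: "j \<in> ?J" and vj: "v = Anti lam mu j" using v by (auto simp: Bset_def split: if_splits)
      have j1: "j \<in> {1..r}" using j by (simp add: Jset_def)
      have "edge_len lam j > 0" using pos j1 by (simp add: edge_len_def)
      then obtain x where x: "x \<in> {0..edge_len lam j}" "sf mu x \<noteq> 0" using sf_nonzero_point by blast
      have w2: "w (j, True) x - w (j, False) x = (if w = v then 2 * sf mu x else 0)" if wB: "w \<in> ?B" for w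
      proof -
        consider "w = ?S" | i where "i \<in> ?J" "w = Anti lam mu i" using wB by (auto simp: Bset_def split: if_splits)
        then show ?thesis
        proof cases
          case 1 then show ?thesis using False by (simp add: Sym_def)
        next
          case 2
          have "i \<in> {1..r}" using 2 by (simp add: Jset_def)
          then have "(w = v) = (i = j)" using 2 vj Anti_inj[OF pos] by metis
          then show ?thesis using 2 x vj by (auto simp: Anti_def)
        qed
      qed
      have "(\<Sum>w\<in>?B. f w * w (j, True) x) - (\<Sum>w\<in>?B. f w * w (j, False) x)
          = (\<Sum>w\<in>?B. if w = v then f w * (2 * sf mu x) else 0)"
        unfolding sum_subtractf[symmetric] by (intro sum.cong refl) (simp add: right_diff_distrib[symmetric] w2)
      also have "\<dots> = f v * (2 * sf mu x)" using v finB by (simp add: sum.delta')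
      finally show ?thesis using ev x by simp
    qed
  qed
qed

lemma mult_card:
  assumes r: "r \<ge> 1" and pos: "\<forall>j\<in>{1..r}. lam j > 0"
  shows "multiplicity_chain r lam mu = (if mu * sf mu (T lam r) = 0 then 1 else 0) + card (Jset r lam mu)"
proof -
  let ?B = "Bset r lam mu" and ?E = "eigenspace_chain r lam mu"
  have BE: "?B \<subseteq> ?E"
    using Sym_eig[OF pos] Anti_eig[OF pos] by (auto simp: Bset_def Jset_def eigenspace_chain_def)
  have EB: "?E \<subseteq> gf.span ?B"
  proof
    fix u assume "u \<in> ?E"
    then have u: "chain_eigenfunction r lam mu u" by (simp add: eigenspace_chain_def)
    obtain c0 D where c: "mu * c0 * sf mu (T lam r) = 0"
      and eq: "u = gf_scale c0 (Sym r lam mu) + (\<Sum>j\<in>Jset r lam mu. gf_scale (D j) (Anti lam mu j))"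
      using eig_repr[OF r pos u] by metis
    have "gf_scale c0 (Sym r lam mu) \<in> gf.span ?B"
    proof (cases "mu * sf mu (T lam r) = 0")
      case True
      then show ?thesis by (intro gf.span_scale gf.span_base) (simp add: Bset_def)
    next
      case False
      then have "c0 = 0" using c by simp
      then show ?thesis by (simp add: gf_scale_def gf.span_zero zero_fun_def[symmetric])
    qed
    moreover have "(\<Sum>j\<in>Jset r lam mu. gf_scale (D j) (Anti lam mu j)) \<in> gf.span ?B"
      by (intro gf.span_sum gf.span_scale gf.span_base) (simp add: Bset_def)
    ultimately show "u \<in> gf.span ?B" unfolding eq by (rule gf.span_add)
  qed
  have "gf.span ?B = gf.span ?E"
  proof
    show "gf.span ?B \<subseteq> gf.span ?E" using BE by (rule gf.span_mono)
    show "gf.span ?E \<subseteq> gf.span ?B" using gf.span_mono[OF EB] by (simp add: gf.span_span)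
  qed
  then have "gf.dim ?E = card ?B" using gf.dim_eq_card Bset_props(1)[OF r pos] by blast
  then show ?thesis using Bset_props(2)[OF r pos] by (simp add: multiplicity_chain_def)
qed


lemma count_lemma:
  fixes g :: "nat \<Rightarrow> real"
  assumes fin: "finite A"
  shows "card {j\<in>A. P (g j)} = (\<Sum>y\<in>g ` A. card {j\<in>A. g j = y} * (if P y then 1 else 0))"
proof -
  have "card {j\<in>A. P (g j)} = (\<Sum>j\<in>A. (if P (g j) then 1 else 0 :: nat))"
    using fin by (simp add: sum.If_cases Int_def conj_commute)
  also have "\<dots> = (\<Sum>y\<in>g ` A. \<Sum>j\<in>{x. x \<in> A \<and> g x = y}. (if P (g j) then 1 else 0 :: nat))"
    by (rule sum.image_gen[OF fin])
  also have "\<dots> = (\<Sum>y\<in>g ` A. card {j\<in>A. g j = y} * (if P y then 1 else 0))"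
  proof (rule sum.cong[OF refl])
    fix y assume "y \<in> g ` A"
    have "(\<Sum>j\<in>{x. x \<in> A \<and> g x = y}. (if P (g j) then 1 else 0 :: nat))
        = (\<Sum>j\<in>{x. x \<in> A \<and> g x = y}. (if P y then 1 else 0 :: nat))"
      by (rule sum.cong) auto
    then show "(\<Sum>j\<in>{x. x \<in> A \<and> g x = y}. (if P (g j) then 1 else 0 :: nat)) = card {j\<in>A. g j = y} * (if P y then 1 else 0)"
      by simp
  qed
  finally show ?thesis .
qed

lemma sinz:
  assumes a: "a > 0" and k: "k > 0"
  shows "sin (k * (a / 2)) = 0 \<longleftrightarrow> (\<exists>N::nat. N \<ge> 1 \<and> k = 2 * pi * real N / a)"
proof
  assume "sin (k * (a / 2)) = 0"
  then obtain i :: int where i: "k * (a / 2) = of_int i * pi" using sin_zero_iff_int2 by blast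
  have "of_int i * pi > 0" using i a k by (metis divide_pos_pos mult_pos_pos zero_less_numeral)
  then have ip: "i > 0" by (simp add: zero_less_mult_iff)
  have "k = 2 * pi * real (nat i) / a" using i ip a by (simp add: field_simps)
  moreover have "nat i \<ge> 1" using ip by simp
  ultimately show "\<exists>N::nat. N \<ge> 1 \<and> k = 2 * pi * real N / a" by blast
next
  assume "\<exists>N::nat. N \<ge> 1 \<and> k = 2 * pi * real N / a"
  then obtain N :: nat where "k = 2 * pi * real N / a" by blast
  then have "k * (a / 2) = real N * pi" using a by (simp add: field_simps)
  then show "sin (k * (a / 2)) = 0" by (simp add: sin_npi)
qed

theorem mainTheorem6:
  fixes r :: nat and lam :: "nat \<Rightarrow> real" and mu :: real
  assumes "r \<ge> 1"
    and "\<forall>j\<in>{1..r}. lam j > 0"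
  defines "L \<equiv> (\<Sum>j\<in>{1..r}. lam j)"
  shows "multiplicity_chain r lam mu =
     (if mu < 0 then 0
      else if mu = 0 then 1
      else (if \<exists>N::nat. N \<ge> 1 \<and> sqrt mu = 2 * pi * real N / L then 1 else 0)
         + (\<Sum>Li\<in>lam ` {1..r}. card {j\<in>{1..r}. lam j = Li} *
              (if \<exists>N::nat. N \<ge> 1 \<and> sqrt mu = 2 * pi * real N / Li then 1 else 0)))"
proof -
  note r = assms(1) and pos = assms(2)
  have TL: "T lam r = L / 2" unfolding T_def L_def edge_len_def by (simp add: sum_divide_distrib)
  have Lpos: "L > 0" unfolding L_def using r pos by (intro sum_pos) auto
  have mc: "multiplicity_chain r lam mu = (if mu * sf mu (T lam r) = 0 then 1 else 0) + card (Jset r lam mu)"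
    by (rule mult_card[OF r pos])
  consider "mu < 0" | "mu = 0" | "mu > 0" by linarith
  then show ?thesis
  proof cases
    case 1
    have s1: "sf mu x \<noteq> 0" if "x > 0" for x using 1 that by (simp add: sf_def)
    have "T lam r > 0" using TL Lpos by simp
    then have "mu * sf mu (T lam r) \<noteq> 0" using 1 s1[of "T lam r"] by simp
    moreover have "Jset r lam mu = {}" using s1 pos by (auto simp: Jset_def edge_len_def)
    ultimately show ?thesis using mc 1 by simp
  next
    case 2
    have "Jset r lam mu = {}"
    proof -
      have "sf mu (edge_len lam j) \<noteq> 0" if "j \<in> {1..r}" for j
        using bspec[OF pos that] 2 by (simp add: edge_len_def sf_def)
      then show ?thesis by (auto simp: Jset_def)
    qed
    then show ?thesis using mc 2 by simp
  next
    case 3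
    have k: "sqrt mu > 0" using 3 by simp
    have sfz: "sf mu (a / 2) = 0 \<longleftrightarrow> (\<exists>N::nat. N \<ge> 1 \<and> sqrt mu = 2 * pi * real N / a)" if "a > 0" for a
      using sinz[OF that k] 3 k by (simp add: sf_def)
    have c1: "(mu * sf mu (T lam r) = 0) \<longleftrightarrow> (\<exists>N::nat. N \<ge> 1 \<and> sqrt mu = 2 * pi * real N / L)"
      using sfz[OF Lpos] 3 unfolding TL by simp
    have J: "Jset r lam mu = {j\<in>{1..r}. (\<lambda>Li. \<exists>N::nat. N \<ge> 1 \<and> sqrt mu = 2 * pi * real N / Li) (lam j)}"
      using sfz pos by (auto simp: Jset_def edge_len_def)
    have "card (Jset r lam mu) = (\<Sum>Li\<in>lam ` {1..r}. card {j\<in>{1..r}. lam j = Li} *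
              (if \<exists>N::nat. N \<ge> 1 \<and> sqrt mu = 2 * pi * real N / Li then 1 else 0))"
      unfolding J by (rule count_lemma) simp
    then show ?thesis using mc c1 3 by simp
  qed
qed

end
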